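(* Let $m,\delta,\gamma>0$ and let $\Gamma(x,y,z,u):=\frac{\Psi(x,z,u,\delta,\gamma)}{\langle Kx,y\rangle-f^*(y)}$ be defined on $\{(x,y)\in\mathbb{R}^n\times\operatorname{dom}f^*:\langle Kx,y\rangle-f^*(y)>m/2\}\times\operatorname{dom}g^*\times\mathbb{R}^n$. Suppose that $f^*$ is calm at $\hat y\in\operatorname{dom}f^*$, that $\hat x\in\mathcal{S}$ satisfies $\langle K\hat x,\hat y\rangle-f^*(\hat y)>m/2$, that $g^*$ is differentiable at $\hat z\in\operatorname{int}(\operatorname{dom}g^* )$, and let $\hat u\in\mathbb{R}^n$. Put $\alpha_1:=\Psi(\hat x,\hat z,\hat u,\delta,\gamma)$, $\alpha_2:=\langle K\hat x,\hat y\rangle-f^*(\hat y)$, and suppose $\alpha_1>0$. Then there exist open sets $\mathcal{O}_1\subseteq\mathbb{R}^n$, $\mathcal{O}_2\subseteq\operatorname{dom}f^*$, $\mathcal{O}_3\subseteq\operatorname{dom}g^*$ with $\hat x\in\mathcal{O}_1$, $\hat y\in\mathcal{O}_2$, $\hat z\in\mathcal{O}_3$, such that $\langle Kx,y\rangle-f^*(y)>m/2$ for all $(x,y)\in\mathcal{O}_1\times\mathcal{O}_2$, and the Fréchet subdifferential $\hat\partial\Gamma(\hat x,\hat y,\hat z,\hat u)$ equals the set of all $(\xi_x,\xi_y,\xi_z,\xi_u)$ with $\xi_x\in\frac{\alpha_2\left(A^*\hat z+\nabla h(\hat x)+\partial\iota_{\mathcal{S}}(\hat x)+\delta(\hat x-\hat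 u)\right)-\alpha_1K^*\hat y}{(\langle K\hat x,\hat y\rangle-f^*(\hat y))^2}$, $\xi_y\in\frac{\alpha_1(\partial f^*(\hat y)-K\hat x)}{(\langle K\hat x,\hat y\rangle-f^*(\hat y))^2}$, $\xi_z=\frac{A\hat x-\nabla g^*(\hat z)-\gamma\hat z}{\langle K\hat x,\hat y\rangle-f^*(\hat y)}$, $\xi_u=\frac{\delta(\hat u-\hat x)}{\langle K\hat x,\hat y\rangle-f^*(\hat y)}$.
   Context: $\mathcal{S}\subseteq\mathbb{R}^n$ nonempty, convex, compact; $A:\mathbb{R}^n\to\mathbb{R}^s$, $K:\mathbb{R}^n\to\mathbb{R}^p$ linear with adjoints $A^*,K^*$; $g:\mathbb{R}^s\to\mathbb{R}\cup\{+\infty\}$ proper, convex, lsc; $h:\mathbb{R}^n\to\mathbb{R}$ differentiable on an open set containing $\mathcal{S}$ with Lipschitz gradient there; $f:\mathbb{R}^p\to\mathbb{R}\cup\{+\infty\}$ proper, convex, lsc with $K(\mathcal{S})\subseteq\operatorname{int}(\operatorname{dom}f)$ and $f(Kx)>0$ on $\mathcal{S}$; $\mathcal{S}\cap A^{-1}(\operatorname{dom}g)\ne\emptyset$ and $\inf_{x\in\mathcal{S}}\{g(Ax)+h(x)\}>0$. $f^*,g^*$ are Fenchel conjugates, $\iota_{\mathcal{S}}$ the indicator of $\mathcal{S}$, $\partial$ the convex subdifferential, $\Psi(x,z,u,\delta,\gamma):=\langle z,Ax\rangle-g^*(z)+h(x)+\iota_{\mathcal{S}}(x)+\frac{\delta}{2}\|x-u\|^2-\frac{\gamma}{2}\|z\|^2$.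 A function $\varphi$ is calm at $\hat y\in\operatorname{dom}\varphi$ if there are $\epsilon,\kappa>0$ with $|\varphi(y)-\varphi(\hat y)|\le\kappa\|y-\hat y\|$ for all $y$ with $\|y-\hat y\|<\epsilon$. The Fréchet subdifferential is $\hat\partial\varphi(\bar w)=\{v:\liminf_{w\to\bar w,w\ne\bar w}\frac{\varphi(w)-\varphi(\bar w)-\langle v,w-\bar w\rangle}{\|w-\bar w\|}\ge0\}$. *)

theory Defs
  imports "HOL-Analysis.Analysis"
begin

definition edom :: "('a \<Rightarrow> ereal) \<Rightarrow> 'a set" where
  "edom \<phi> = {x. \<phi> x < \<infinity>}"

definition proper_fun :: "('a \<Rightarrow> ereal) \<Rightarrow> bool" where
  "proper_fun \<phi> \<longleftrightarrow> (\<forall>x. \<phi> x \<noteq> -\<infinity>) \<and> (\<exists>x. \<phi> x \<noteq> \<infinity>)"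

definition convex_fun :: "('a::real_vector \<Rightarrow> ereal) \<Rightarrow> bool" where
  "convex_fun \<phi> \<longleftrightarrow> convex {(x, r::real). \<phi> x \<le> ereal r}"

definition lsc_fun :: "('a::topological_space \<Rightarrow> ereal) \<Rightarrow> bool" where
  "lsc_fun \<phi> \<longleftrightarrow> (\<forall>x. \<phi> x \<le> Liminf (at x) \<phi>)"

definition fconj :: "('a::real_inner \<Rightarrow> ereal) \<Rightarrow> 'a \<Rightarrow> ereal" where
  "fconj \<phi> y = (SUP x. ereal (inner x y) - \<phi> x)"

definition ind :: "'a set \<Rightarrow> 'a \<Rightarrow> ereal" where
  "ind S x = (if x \<in> S then 0 else \<infinity>)"

definition csubdiff :: "('a::real_inner \<Rightarrow> ereal) \<Rightarrow> 'a \<Rightarrow> 'a set" where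
  "csubdiff \<phi> x = {v. \<bar>\<phi> x\<bar> \<noteq> \<infinity> \<and> (\<forall>y. \<phi> y \<ge> \<phi> x + ereal (inner v (y - x)))}"

definition calm_at :: "('a::real_normed_vector \<Rightarrow> ereal) \<Rightarrow> 'a \<Rightarrow> bool" where
  "calm_at \<phi> y0 \<longleftrightarrow> (\<exists>\<epsilon>>0. \<exists>\<kappa>>0. \<forall>y. norm (y - y0) < \<epsilon> \<longrightarrow>
       \<bar>\<phi> y - \<phi> y0\<bar> \<le> ereal (\<kappa> * norm (y - y0)))"

definition frechet_subdiff :: "('a::real_inner \<Rightarrow> ereal) \<Rightarrow> 'a \<Rightarrow> 'a set" where
  "frechet_subdiff \<phi> w0 = {v. \<bar>\<phi> w0\<bar> \<noteq> \<infinity> \<and>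
     Liminf (at w0) (\<lambda>w. (\<phi> w - \<phi> w0 - ereal (inner v (w - w0))) / ereal (norm (w - w0))) \<ge> 0}"

definition Psi :: "('a::real_inner \<Rightarrow> 'b::real_inner) \<Rightarrow> ('b \<Rightarrow> ereal) \<Rightarrow> ('a \<Rightarrow> real) \<Rightarrow> 'a set
     \<Rightarrow> 'a \<Rightarrow> 'b \<Rightarrow> 'a \<Rightarrow> real \<Rightarrow> real \<Rightarrow> ereal" where
  "Psi A g h S x z u \<delta> \<gamma> = ereal (inner z (A x)) - fconj g z + ereal (h x) + ind S x
      + ereal (\<delta> / 2 * (norm (x - u))\<^sup>2) - ereal (\<gamma> / 2 * (norm z)\<^sup>2)"

definition Gam :: "('a::real_inner \<Rightarrow> 'b::real_inner) \<Rightarrow> ('a \<Rightarrow> 'c::real_inner) \<Rightarrow> ('c \<Rightarrow> ereal)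
     \<Rightarrow> ('b \<Rightarrow> ereal) \<Rightarrow> ('a \<Rightarrow> real) \<Rightarrow> 'a set \<Rightarrow> real \<Rightarrow> real \<Rightarrow> real
     \<Rightarrow> 'a \<times> 'c \<times> 'b \<times> 'a \<Rightarrow> ereal" where
  "Gam A K f g h S m \<delta> \<gamma> w = (case w of (x, y, z, u) \<Rightarrow>
     (if y \<in> edom (fconj f) \<and> ereal (inner (K x) y) - fconj f y > ereal (m / 2) \<and> z \<in> edom (fconj g)
      then Psi A g h S x z u \<delta> \<gamma> / (ereal (inner (K x) y) - fconj f y)
      else \<infinity>))"

end

theory Submission
  imports Defs
begin

lemma frechet_char:
  fixes G :: "'w::real_inner \<Rightarrow> ereal"
  assumes ev: "eventually (\<lambda>w. (D w \<longrightarrow> G w = ereal (R w)) \<and> (\<not> D w \<longrightarrow> G w = \<infinity>)) (at w0)"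
    and G0: "G w0 = ereal (R w0)"
  shows "v \<in> frechet_subdiff G w0 \<longleftrightarrow>
    (\<forall>e>0. eventually (\<lambda>w. D w \<longrightarrow> R w - R w0 - inner v (w - w0) > - e * norm (w - w0)) (at w0))"
proof -
  have ne: "eventually (\<lambda>w. w \<noteq> w0) (at w0)" by (rule eventually_neq_at_within)
  let ?q = "\<lambda>w. (G w - G w0 - ereal (inner v (w - w0))) / ereal (norm (w - w0))"
  have "v \<in> frechet_subdiff G w0 \<longleftrightarrow> (\<forall>y<0. eventually (\<lambda>w. y < ?q w) (at w0))"
    unfolding frechet_subdiff_def using G0 by (simp add: le_Liminf_iff)
  also have "\<dots> \<longleftrightarrow> (\<forall>e>0. eventually (\<lambda>w. D w \<longrightarrow> R w - R w0 - inner v (w - w0) > - e * norm (w - w0)) (at w0))"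
  proof safe
    fix e :: real assume H: "\<forall>y<0. eventually (\<lambda>w. y < ?q w) (at w0)" and e: "e > 0"
    have "eventually (\<lambda>w. ereal (-e) < ?q w) (at w0)" using H e by simp
    then show "eventually (\<lambda>w. D w \<longrightarrow> R w - R w0 - inner v (w - w0) > - e * norm (w - w0)) (at w0)"
      using ev ne
    proof eventually_elim
      case (elim w)
      show ?case
      proof
        assume "D w"
        with elim have "ereal (-e) < ereal ((R w - R w0 - inner v (w - w0)) / norm (w - w0))"
          using G0 by simp
        then have "-e < (R w - R w0 - inner v (w - w0)) / norm (w - w0)" by simp
        moreover have "norm (w - w0) > 0" using elim by simp
        ultimately show "R w - R w0 - inner v (w - w0) > - e * norm (w - w0)"
          by (simp add: field_simps)
      qed
    qed
  next
    fix y :: ereal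
    assume H: "\<forall>e>0. eventually (\<lambda>w. D w \<longrightarrow> R w - R w0 - inner v (w - w0) > - e * norm (w - w0)) (at w0)"
      and y: "y < 0"
    obtain e where e: "e > 0" "y \<le> ereal (-e)"
    proof (cases y)
      case (real r) then show ?thesis using y that[of "-r"] by simp
    next
      case PInf then show ?thesis using y by simp
    next
      case MInf then show ?thesis using that[of 1] by simp
    qed
    have "eventually (\<lambda>w. ereal (-e) < ?q w) (at w0)"
      using H[rule_format, OF e(1)] ev ne
    proof eventually_elim
      case (elim w)
      have n: "norm (w - w0) > 0" using elim by simp
      show ?case
      proof (cases "D w")
        case True
        then have "-e < (R w - R w0 - inner v (w - w0)) / norm (w - w0)"
          using elim n by (simp add: field_simps)
        then show ?thesis using True elim G0 n by simp
      next
        case False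
        then show ?thesis using elim G0 n by simp
      qed
    qed
    then show "eventually (\<lambda>w. y < ?q w) (at w0)"
      by eventually_elim (use e in auto)
  qed
  finally show ?thesis .
qed

lemma calm_comp_deriv:
  fixes \<Phi> :: "'p::real_normed_vector \<Rightarrow> real" and \<gamma> :: "'w::real_normed_vector \<Rightarrow> 'p"
  assumes d: "(\<Phi> has_derivative \<Phi>') (at p0)"
    and L: "eventually (\<lambda>w. norm (\<gamma> w - p0) \<le> L * norm (w - w0)) (at w0)"
    and e: "e > 0"
  shows "eventually (\<lambda>w. \<bar>\<Phi> (\<gamma> w) - \<Phi> p0 - \<Phi>' (\<gamma> w - p0)\<bar> \<le> e * norm (w - w0)) (at w0)"
proof -
  define L' where "L' = max L 0 + 1"
  have L'pos: "L' > 0" and LL': "L \<le> L'" unfolding L'_def by auto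
  obtain d where d0: "d > 0" and dd: "\<forall>p. norm (p - p0) < d \<longrightarrow>
      norm (\<Phi> p - \<Phi> p0 - \<Phi>' (p - p0)) \<le> (e / L') * norm (p - p0)"
    using d e L'pos unfolding has_derivative_at_alt by (meson divide_pos_pos)
  have "eventually (\<lambda>w. dist w w0 < d / L') (at w0)"
    using d0 L'pos unfolding eventually_at by (intro exI[of _ "d / L'"]) auto
  with L show ?thesis
  proof eventually_elim
    case (elim w)
    have 1: "norm (\<gamma> w - p0) \<le> L' * norm (w - w0)"
      using elim LL' by (meson mult_right_mono norm_ge_zero order_trans)
    also have "\<dots> < d" using elim L'pos by (simp add: dist_norm field_simps)
    finally have "norm (\<Phi> (\<gamma> w) - \<Phi> p0 - \<Phi>' (\<gamma> w - p0)) \<le> (e / L') * norm (\<gamma> w - p0)"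
      using dd by blast
    also have "\<dots> \<le> (e / L') * (L' * norm (w - w0))"
      using 1 e L'pos by (intro mult_left_mono) auto
    also have "\<dots> = e * norm (w - w0)" using L'pos by simp
    finally show ?case by simp
  qed
qed

lemma fconj_neq_minf:
  assumes "proper_fun \<phi>" shows "fconj \<phi> y \<noteq> -\<infinity>"
proof -
  obtain x0 where x0: "\<phi> x0 \<noteq> \<infinity>" "\<phi> x0 \<noteq> -\<infinity>" using assms unfolding proper_fun_def by blast
  then obtain r where r: "\<phi> x0 = ereal r" by (cases "\<phi> x0") auto
  have "ereal (inner x0 y) - \<phi> x0 \<le> fconj \<phi> y" unfolding fconj_def by (rule SUP_upper) simp
  then show ?thesis using r by auto
qed

lemma fconj_convex:
  assumes a1: "fconj \<phi> y1 = ereal a1" and a2: "fconj \<phi> y2 = ereal a2" and t: "0 \<le> t" "t \<le> 1"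
  shows "fconj \<phi> ((1 - t) *\<^sub>R y1 + t *\<^sub>R y2) \<le> ereal ((1 - t) * a1 + t * a2)"
  unfolding fconj_def
proof (rule SUP_least)
  fix x assume "x \<in> (UNIV :: 'a set)"
  have u1: "ereal (inner x y1) - \<phi> x \<le> ereal a1" using a1 unfolding fconj_def by (metis SUP_upper UNIV_I)
  have u2: "ereal (inner x y2) - \<phi> x \<le> ereal a2" using a2 unfolding fconj_def by (metis SUP_upper UNIV_I)
  show "ereal (inner x ((1 - t) *\<^sub>R y1 + t *\<^sub>R y2)) - \<phi> x \<le> ereal ((1 - t) * a1 + t * a2)"
  proof (cases "\<phi> x")
    case (real r)
    then have "inner x y1 - r \<le> a1" "inner x y2 - r \<le> a2" using u1 u2 by auto
    then have "(1 - t) * (inner x y1 - r) + t * (inner x y2 - r) \<le> (1 - t) * a1 + t * a2"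
      using t by (intro add_mono mult_left_mono) auto
    then show ?thesis using real by (simp add: inner_add_right algebra_simps)
  next
    case PInf then show ?thesis by simp
  next
    case MInf then show ?thesis using u1 by simp
  qed
qed

lemma csubdiff_ind:
  assumes "xh \<in> S"
  shows "v \<in> csubdiff (ind S) xh \<longleftrightarrow> (\<forall>y\<in>S. inner v (y - xh) \<le> 0)"
proof
  assume "v \<in> csubdiff (ind S) xh"
  then have "\<forall>y. ind S y \<ge> ind S xh + ereal (inner v (y - xh))" unfolding csubdiff_def by auto
  then show "\<forall>y\<in>S. inner v (y - xh) \<le> 0" using assms unfolding ind_def
    by (metis add_0 ereal_less_eq(3) ereal_less_eq(2) ereal_zero_times zero_ereal_def)
next
  assume "\<forall>y\<in>S. inner v (y - xh) \<le> 0"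
  then show "v \<in> csubdiff (ind S) xh" using assms unfolding csubdiff_def ind_def
    by (auto simp: zero_ereal_def)
qed

lemma ev_ray:
  fixes w0 :: "'w::real_normed_vector"
  assumes "eventually P (at w0)" "dir \<noteq> 0"
  shows "\<exists>t>0. t \<le> 1 \<and> P (w0 + t *\<^sub>R dir)"
proof -
  obtain d where d: "d > 0" "\<forall>x. x \<noteq> w0 \<and> dist x w0 < d \<longrightarrow> P x"
    using assms(1) unfolding eventually_at by auto
  define t where "t = min 1 (d / (2 * norm dir))"
  have nd: "norm dir > 0" using assms(2) by simp
  have t0: "t > 0" "t \<le> 1" using d nd unfolding t_def by auto
  have "t * norm dir \<le> (d / (2 * norm dir)) * norm dir"
    unfolding t_def using nd by (intro mult_right_mono) auto
  also have "\<dots> = d / 2" using nd by simp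
  finally have "t * norm dir \<le> d / 2" .
  then have "dist (w0 + t *\<^sub>R dir) w0 < d" using d t0 by (simp add: dist_norm)
  moreover have "w0 + t *\<^sub>R dir \<noteq> w0" using t0 assms(2) by simp
  ultimately show ?thesis using d t0 by blast
qed

lemma char_iff:
  fixes S :: "'a::real_inner set" and f :: "'c::real_inner \<Rightarrow> ereal" and F :: "'c \<Rightarrow> real"
    and a :: 'a and b :: 'c and cz :: "'b::real_inner" and cu :: 'a
  assumes S: "convex S" "xh \<in> S" and c: "c > 0" and eps: "\<epsilon> > 0"
    and Fe: "\<forall>y. norm (y - yh) < \<epsilon> \<longrightarrow> fconj f y = ereal (F y)"
    and pf: "proper_fun f"
  shows "(\<forall>e>0. eventually (\<lambda>w. fst w \<in> S \<longrightarrow> c * (F (fst (snd w)) - F yh)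
              - inner (a, b, cz, cu) (w - (xh, yh, zh, uh)) > - e * norm (w - (xh, yh, zh, uh)))
            (at (xh, yh, zh, uh)))
     \<longleftrightarrow> (a \<in> csubdiff (ind S) xh \<and> (1/c) *\<^sub>R b \<in> csubdiff (fconj f) yh \<and> cz = 0 \<and> cu = 0)"
    (is "(\<forall>e>0. eventually (?P e) ?F) \<longleftrightarrow> _")
proof
  assume H: "\<forall>e>0. eventually (?P e) ?F"
  have Fyh: "fconj f yh = ereal (F yh)" using Fe eps by simp
  have "cz = 0"
  proof (rule ccontr)
    assume nz: "cz \<noteq> 0"
    have d0: "(0::'a, 0::'c, cz, 0::'a) \<noteq> 0" using nz by (simp add: zero_prod_def)
    have p0: "norm cz > 0" using nz by simp
    from ev_ray[OF H[rule_format, OF p0] d0]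
    obtain t where t: "t > 0" "?P (norm cz) ((xh, yh, zh, uh) + t *\<^sub>R (0::'a, 0::'c, cz, 0::'a))" by blast
    have n: "norm ((0::'a), (0::'c), t *\<^sub>R cz, (0::'a)) = t * norm cz"
      using t by (simp add: norm_Pair)
    from t(2) S(2) have "- (t * (cz \<bullet> cz)) > - norm cz * (t * norm cz)"
      using n t(1) by simp
    moreover have "cz \<bullet> cz = norm cz * norm cz" by (simp add: power2_norm_eq_inner[symmetric] power2_eq_square)
    ultimately show False using t(1) by (simp add: algebra_simps)
  qed
  moreover have "cu = 0"
  proof (rule ccontr)
    assume nz: "cu \<noteq> 0"
    have d0: "(0::'a, 0::'c, 0::'b, cu) \<noteq> 0" using nz by (simp add: zero_prod_def)
    have p0: "norm cu > 0" using nz by simp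
    from ev_ray[OF H[rule_format, OF p0] d0]
    obtain t where t: "t > 0" "?P (norm cu) ((xh, yh, zh, uh) + t *\<^sub>R (0::'a, 0::'c, 0::'b, cu))" by blast
    have n: "norm ((0::'a), (0::'c), (0::'b), t *\<^sub>R cu) = t * norm cu"
      using t by (simp add: norm_Pair)
    from t(2) S(2) have "- (t * (cu \<bullet> cu)) > - norm cu * (t * norm cu)"
      using n t(1) by simp
    moreover have "cu \<bullet> cu = norm cu * norm cu" by (simp add: power2_norm_eq_inner[symmetric] power2_eq_square)
    ultimately show False using t(1) by (simp add: algebra_simps)
  qed
  moreover have "\<forall>y\<in>S. inner a (y - xh) \<le> 0"
  proof (rule ccontr)
    assume "\<not> (\<forall>y\<in>S. inner a (y - xh) \<le> 0)"
    then obtain y where y: "y \<in> S" "inner a (y - xh) > 0" by auto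
    then have ny: "y - xh \<noteq> 0" by auto
    define e where "e = inner a (y - xh) / norm (y - xh)"
    have e0: "e > 0" using y ny unfolding e_def by simp
    have d0: "(y - xh, 0::'c, 0::'b, 0::'a) \<noteq> 0" using ny by (simp add: zero_prod_def)
    from ev_ray[OF H[rule_format, OF e0] d0]
    obtain t where t: "t > 0" "t \<le> 1" "?P e ((xh, yh, zh, uh) + t *\<^sub>R (y - xh, 0::'c, 0::'b, 0::'a))" by blast
    have "(1 - t) *\<^sub>R xh + t *\<^sub>R y \<in> S"
      using t S y(1) by (intro convexD) auto
    moreover have "(1 - t) *\<^sub>R xh + t *\<^sub>R y = xh + t *\<^sub>R (y - xh)" by (simp add: algebra_simps)
    ultimately have inS: "xh + t *\<^sub>R (y - xh) \<in> S" by simp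
    have n: "norm (t *\<^sub>R (y - xh), (0::'c), (0::'b), (0::'a)) = t * norm (y - xh)"
      using t by (simp add: norm_Pair)
    from t(3) inS have "- (t * inner a (y - xh)) > - e * (t * norm (y - xh))"
      using n t(1) by simp
    moreover have "e * norm (y - xh) = inner a (y - xh)" using ny unfolding e_def by simp
    ultimately show False by (simp add: algebra_simps)
  qed
  then have "a \<in> csubdiff (ind S) xh" using csubdiff_ind[OF S(2)] by simp
  moreover have "(1/c) *\<^sub>R b \<in> csubdiff (fconj f) yh"
    unfolding csubdiff_def
  proof (intro CollectI conjI allI)
    show "\<bar>fconj f yh\<bar> \<noteq> \<infinity>" using Fyh by simp
    fix y
    show "fconj f yh + ereal (inner ((1/c) *\<^sub>R b) (y - yh)) \<le> fconj f y"
    proof (cases "fconj f y")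
      case PInf then show ?thesis by simp
    next
      case MInf then show ?thesis using fconj_neq_minf[OF pf] by simp
    next
      case (real Fy)
      show ?thesis
      proof (rule ccontr)
        assume "\<not> ?thesis"
        then have lt: "Fy < F yh + inner ((1/c) *\<^sub>R b) (y - yh)" using real Fyh by simp
        then have ny: "y - yh \<noteq> 0" using real Fyh by auto
        define gap where "gap = F yh + inner ((1/c) *\<^sub>R b) (y - yh) - Fy"
        have gap0: "gap > 0" using lt unfolding gap_def by simp
        define e where "e = c * gap / norm (y - yh)"
        have e0: "e > 0" using gap0 c ny unfolding e_def by simp
        have "eventually (\<lambda>w. ?P e w \<and> dist w (xh, yh, zh, uh) < \<epsilon>) ?F"
          using H[rule_format, OF e0] eps
          by (intro eventually_conj) (auto simp: eventually_at intro!: exI[of _ \<epsilon>])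
        moreover have d0: "(0::'a, y - yh, 0::'b, 0::'a) \<noteq> 0" using ny by (simp add: zero_prod_def)
        ultimately obtain t where t: "t > 0" "t \<le> 1" "?P e ((xh, yh, zh, uh) + t *\<^sub>R (0::'a, y - yh, 0::'b, 0::'a))"
          "dist ((xh, yh, zh, uh) + t *\<^sub>R (0::'a, y - yh, 0::'b, 0::'a)) (xh, yh, zh, uh) < \<epsilon>"
          using ev_ray by blast
        have n: "norm ((0::'a), t *\<^sub>R (y - yh), (0::'b), (0::'a)) = t * norm (y - yh)"
          using t by (simp add: norm_Pair)
        have nyt: "norm (yh + t *\<^sub>R (y - yh) - yh) < \<epsilon>" using t(4) n by (simp add: dist_norm)
        have yt: "yh + t *\<^sub>R (y - yh) = (1 - t) *\<^sub>R yh + t *\<^sub>R y" by (simp add: algebra_simps)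
        have "fconj f (yh + t *\<^sub>R (y - yh)) \<le> ereal ((1 - t) * F yh + t * Fy)"
          unfolding yt using fconj_convex[OF Fyh real, of t] t by simp
        then have Fyt: "F (yh + t *\<^sub>R (y - yh)) \<le> (1 - t) * F yh + t * Fy"
          using Fe nyt by simp
        from t(3) S(2) have ineq: "c * (F (yh + t *\<^sub>R (y - yh)) - F yh) - t * inner b (y - yh)
            > - e * (t * norm (y - yh))"
          using n t(1) by simp
        have "e * norm (y - yh) = c * gap" using ny unfolding e_def by simp
        then have "- e * (t * norm (y - yh)) = - t * (c * gap)" by (simp add: algebra_simps)
        also have "c * gap = c * F yh + inner b (y - yh) - c * Fy"
          unfolding gap_def using c by (simp add: algebra_simps)
        finally have r: "- e * (t * norm (y - yh)) = - t * (c * F yh + inner b (y - yh) - c * Fy)" .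
        have "c * (F (yh + t *\<^sub>R (y - yh)) - F yh) \<le> c * ((1 - t) * F yh + t * Fy - F yh)"
          using Fyt c by (intro mult_left_mono) auto
        then show False using ineq r by (simp add: algebra_simps)
      qed
    qed
  qed
  ultimately show "a \<in> csubdiff (ind S) xh \<and> (1/c) *\<^sub>R b \<in> csubdiff (fconj f) yh \<and> cz = 0 \<and> cu = 0"
    by simp
next
  assume R: "a \<in> csubdiff (ind S) xh \<and> (1/c) *\<^sub>R b \<in> csubdiff (fconj f) yh \<and> cz = 0 \<and> cu = 0"
  then have na: "\<forall>y\<in>S. inner a (y - xh) \<le> 0" using csubdiff_ind[OF S(2)] by simp
  have Fyh: "fconj f yh = ereal (F yh)" using Fe eps by simp
  have sb: "\<forall>y. fconj f y \<ge> fconj f yh + ereal (inner ((1/c) *\<^sub>R b) (y - yh))"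
    using R unfolding csubdiff_def by simp
  show "\<forall>e>0. eventually (?P e) ?F"
  proof (intro allI impI)
    fix e :: real assume e: "e > 0"
    have "eventually (\<lambda>w. w \<noteq> (xh, yh, zh, uh) \<and> dist w (xh, yh, zh, uh) < \<epsilon>) ?F"
      using eps by (auto simp: eventually_at intro!: exI[of _ \<epsilon>])
    then show "eventually (?P e) ?F"
    proof eventually_elim
      case (elim w)
      obtain x y z u where w: "w = (x, y, z, u)" by (cases w) auto
      show ?case
      proof
        assume "fst w \<in> S"
        then have xS: "x \<in> S" using w by simp
        have "norm (y - yh) \<le> norm (y - yh, z - zh, u - uh)" by (rule norm_fst_le)
        also have "\<dots> \<le> norm (x - xh, y - yh, z - zh, u - uh)" by (rule norm_snd_le)
        also have "\<dots> < \<epsilon>" using elim w by (simp add: dist_norm)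
        finally have "fconj f y = ereal (F y)" using Fe by simp
        then have "F y \<ge> F yh + inner ((1/c) *\<^sub>R b) (y - yh)" using sb[rule_format, of y] Fyh by simp
        then have "c * (F y - F yh) \<ge> c * inner ((1/c) *\<^sub>R b) (y - yh)"
          using c by (intro mult_left_mono) auto
        then have 1: "c * (F y - F yh) \<ge> inner b (y - yh)" using c by simp
        have 2: "inner a (x - xh) \<le> 0" using na xS by simp
        have 3: "norm (w - (xh, yh, zh, uh)) > 0" using elim by simp
        show "c * (F (fst (snd w)) - F yh) - inner (a, b, cz, cu) (w - (xh, yh, zh, uh))
              > - e * norm (w - (xh, yh, zh, uh))"
        proof -
          have "e * norm (w - (xh, yh, zh, uh)) > 0" using 3 e by simp
          then show ?thesis using 1 2 R w by simp
        qed
      qed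
    qed
  qed
qed

lemma Phi_deriv:
  fixes A :: "'a::euclidean_space \<Rightarrow> 'b::euclidean_space" and K :: "'a \<Rightarrow> 'c::euclidean_space"
    and Gs :: "'b \<Rightarrow> real" and h :: "'a \<Rightarrow> real" and \<delta> \<gamma> :: real and uh :: 'a and yh :: 'c
  assumes lin: "linear A" "linear K"
    and dG: "(Gs has_derivative (\<lambda>v. inner v Dg)) (at zh)"
    and dh: "(h has_derivative (\<lambda>v. inner v gh)) (at xh)"
    and den0: "inner (K xh) yh - s0 \<noteq> 0"
  defines "P \<equiv> \<lambda>w::'a \<times> 'c \<times> 'b \<times> 'a. inner (fst (snd (snd w))) (A (fst w)) - Gs (fst (snd (snd w))) + h (fst w)
        + \<delta> / 2 * inner (fst w - snd (snd (snd w))) (fst w - snd (snd (snd w)))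
        - \<gamma> / 2 * inner (fst (snd (snd w))) (fst (snd (snd w)))"
  defines "lP \<equiv> (adjoint A zh + gh + \<delta> *\<^sub>R (xh - uh), 0::'c, A xh - Dg - \<gamma> *\<^sub>R zh, \<delta> *\<^sub>R (uh - xh))"
  defines "lB \<equiv> (adjoint K yh, K xh, 0::'b, 0::'a)"
  shows "((\<lambda>p. P (fst p) / (inner (K (fst (fst p))) (fst (snd (fst p))) - snd p)) has_derivative
     (\<lambda>dp. - P (xh, yh, zh, uh) * (inverse (inner (K xh) yh - s0) * (inner lB (fst dp) - snd dp)
            * inverse (inner (K xh) yh - s0)) + inner lP (fst dp) / (inner (K xh) yh - s0)))
     (at ((xh, yh, zh, uh), s0))"
proof -
  let ?p0 = "((xh, yh, zh, uh), s0)"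
  have bA: "bounded_linear A" "bounded_linear K" using lin linear_conv_bounded_linear by auto
  have z: "((\<lambda>p::('a \<times> 'c \<times> 'b \<times> 'a) \<times> real. fst (snd (snd (fst p)))) has_derivative (\<lambda>p. fst (snd (snd (fst p))))) (at ?p0)"
    by (intro derivative_intros)
  have x: "((\<lambda>p::('a \<times> 'c \<times> 'b \<times> 'a) \<times> real. fst (fst p)) has_derivative (\<lambda>p. fst (fst p))) (at ?p0)"
    by (intro derivative_intros)
  have G: "((\<lambda>p::('a \<times> 'c \<times> 'b \<times> 'a) \<times> real. Gs (fst (snd (snd (fst p))))) has_derivative (\<lambda>p. inner (fst (snd (snd (fst p)))) Dg)) (at ?p0)"
    using has_derivative_compose[OF z] dG by simp
  have H: "((\<lambda>p::('a \<times> 'c \<times> 'b \<times> 'a) \<times> real. h (fst (fst p))) has_derivative (\<lambda>p. inner (fst (fst p)) gh)) (at ?p0)"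
    using has_derivative_compose[OF x] dh by simp
  have a1: "\<And>v. zh \<bullet> A v = v \<bullet> adjoint A zh" by (simp add: adjoint_works[OF lin(1)] inner_commute)
  have a2: "\<And>v. K v \<bullet> yh = v \<bullet> adjoint K yh" by (simp add: adjoint_works[OF lin(2)])
  have dP: "((\<lambda>p. P (fst p)) has_derivative (\<lambda>dp. inner lP (fst dp))) (at ?p0)"
    unfolding P_def
    apply (rule derivative_eq_intros G H bounded_linear.has_derivative[OF bA(1)] | simp)+
    apply (rule ext)
    apply (clarsimp simp: lP_def a1 inner_diff_left inner_diff_right inner_add_left
        inner_add_right)
    apply (simp add: inner_commute algebra_simps)
    apply (simp add: field_simps)
    done
  have dD: "((\<lambda>p. inner (K (fst (fst p))) (fst (snd (fst p))) - snd p) has_derivative (\<lambda>dp. inner lB (fst dp) - snd dp)) (at ?p0)"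
    apply (rule derivative_eq_intros bounded_linear.has_derivative[OF bA(2)] | simp)+
    apply (rule ext)
    apply (clarsimp simp: lB_def a2)
    apply (simp add: inner_commute algebra_simps)
    done
  show ?thesis
    using has_derivative_divide[OF dP dD] den0 by simp
qed

lemma half_aux:
  fixes a b q :: real
  assumes "a > - (q / 2)" "\<bar>a - b\<bar> \<le> q / 2" shows "b > - q"
  using assms abs_le_iff[of "a - b" "q / 2"] by linarith

lemma transfer_ev:
  fixes X Y N :: "'w \<Rightarrow> real"
  assumes "\<forall>e>0. eventually (\<lambda>w. \<bar>X w - Y w\<bar> \<le> e * N w) F"
  shows "(\<forall>e>0. eventually (\<lambda>w. D w \<longrightarrow> X w > - e * N w) F) \<longleftrightarrow>
         (\<forall>e>0. eventually (\<lambda>w. D w \<longrightarrow> Y w > - e * N w) F)"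
proof safe
  fix e :: real assume H: "\<forall>e>0. eventually (\<lambda>w. D w \<longrightarrow> X w > - e * N w) F" and e: "e > 0"
  have e2: "e / 2 > 0" using e by simp
  from H[rule_format, OF e2] assms[rule_format, OF e2]
  show "eventually (\<lambda>w. D w \<longrightarrow> Y w > - e * N w) F"
  proof eventually_elim
    case (elim w)
    then show ?case using half_aux[where a="X w" and b="Y w" and q="e * N w"] by auto
  qed
next
  fix e :: real assume H: "\<forall>e>0. eventually (\<lambda>w. D w \<longrightarrow> Y w > - e * N w) F" and e: "e > 0"
  have e2: "e / 2 > 0" using e by simp
  from H[rule_format, OF e2] assms[rule_format, OF e2]
  show "eventually (\<lambda>w. D w \<longrightarrow> X w > - e * N w) F"
  proof eventually_elim
    case (elim w)
    then show ?case using half_aux[where a="Y w" and b="X w" and q="e * N w"] by (auto simp: abs_minus_commute)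
  qed
qed

lemma Psi_eq:
  assumes gz: "fconj g z = ereal Gz" and xS: "x \<in> S"
  shows "Psi A g h S x z u \<delta> \<gamma> = ereal (inner z (A x) - Gz + h x + \<delta> / 2 * inner (x - u) (x - u) - \<gamma> / 2 * inner z z)"
  using assms unfolding Psi_def ind_def by (simp add: power2_norm_eq_inner)

lemma Gam_eq:
  assumes fy: "fconj f y = ereal Fy" and gz: "fconj g z = ereal Gz" and pos: "inner (K x) y - Fy > m / 2" "m > 0"
  shows "Gam A K f g h S m \<delta> \<gamma> (x, y, z, u) = (if x \<in> S then ereal ((inner z (A x) - Gz + h x
     + \<delta> / 2 * inner (x - u) (x - u) - \<gamma> / 2 * inner z z) / (inner (K x) y - Fy)) else \<infinity>)"
proof -
  have d: "inner (K x) y - Fy > 0" using pos by simp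
  have c: "y \<in> edom (fconj f) \<and> ereal (inner (K x) y) - fconj f y > ereal (m / 2) \<and> z \<in> edom (fconj g)"
    using fy gz pos unfolding edom_def by simp
  show ?thesis
  proof (cases "x \<in> S")
    case True
    then show ?thesis using c d fy Psi_eq[OF gz True] unfolding Gam_def by simp
  next
    case False
    then show ?thesis using c d fy gz unfolding Gam_def Psi_def ind_def by simp
  qed
qed

theorem lemma6p1:
  fixes S :: "'a::euclidean_space set"
    and A :: "'a \<Rightarrow> 'b::euclidean_space"
    and K :: "'a \<Rightarrow> 'c::euclidean_space"
    and g :: "'b \<Rightarrow> ereal" and f :: "'c \<Rightarrow> ereal"
    and h :: "'a \<Rightarrow> real" and gradh :: "'a \<Rightarrow> 'a" and U :: "'a set"
    and m \<delta> \<gamma> :: real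
    and xh uh :: 'a and yh :: 'c and zh :: 'b and Dg :: 'b
  assumes S: "S \<noteq> {}" "convex S" "compact S"
    and lin: "linear A" "linear K"
    and g: "proper_fun g" "convex_fun g" "lsc_fun g"
    and h: "open U" "S \<subseteq> U" "\<forall>x\<in>U. GDERIV h x :> gradh x"
           "\<exists>L. \<forall>x\<in>U. \<forall>x'\<in>U. norm (gradh x - gradh x') \<le> L * norm (x - x')"
    and f: "proper_fun f" "convex_fun f" "lsc_fun f"
           "K ` S \<subseteq> interior (edom f)" "\<forall>x\<in>S. f (K x) > 0"
    and feas: "S \<inter> A -` edom g \<noteq> {}"
    and infpos: "(INF x\<in>S. g (A x) + ereal (h x)) > 0"
    and par: "m > 0" "\<delta> > 0" "\<gamma> > 0"
    and calm: "yh \<in> edom (fconj f)" "calm_at (fconj f) yh"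
    and xh: "xh \<in> S" "ereal (inner (K xh) yh) - fconj f yh > ereal (m / 2)"
    and zh: "zh \<in> interior (edom (fconj g))"
            "GDERIV (\<lambda>z. real_of_ereal (fconj g z)) zh :> Dg"
    and alpha1: "Psi A g h S xh zh uh \<delta> \<gamma> > 0"
  shows "let \<alpha>1 = real_of_ereal (Psi A g h S xh zh uh \<delta> \<gamma>);
             \<alpha>2 = inner (K xh) yh - real_of_ereal (fconj f yh)
         in \<exists>O1 O2 O3. open O1 \<and> open O2 \<and> open O3 \<and>
              O2 \<subseteq> edom (fconj f) \<and> O3 \<subseteq> edom (fconj g) \<and>
              xh \<in> O1 \<and> yh \<in> O2 \<and> zh \<in> O3 \<and>
              (\<forall>x\<in>O1. \<forall>y\<in>O2. ereal (inner (K x) y) - fconj f y > ereal (m / 2)) \<and>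
              frechet_subdiff (Gam A K f g h S m \<delta> \<gamma>) (xh, yh, zh, uh) =
                {(\<xi>x, \<xi>y, \<xi>z, \<xi>u).
                   (\<exists>w\<in>csubdiff (ind S) xh.
                      \<xi>x = (1 / \<alpha>2\<^sup>2) *\<^sub>R (\<alpha>2 *\<^sub>R (adjoint A zh + gradh xh + w + \<delta> *\<^sub>R (xh - uh))
                                          - \<alpha>1 *\<^sub>R adjoint K yh)) \<and>
                   (\<exists>v\<in>csubdiff (fconj f) yh. \<xi>y = (\<alpha>1 / \<alpha>2\<^sup>2) *\<^sub>R (v - K xh)) \<and>
                   \<xi>z = (1 / \<alpha>2) *\<^sub>R (A xh - Dg - \<gamma> *\<^sub>R zh) \<and>
                   \<xi>u = (\<delta> / \<alpha>2) *\<^sub>R (uh - xh)}"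
proof -
  define F where "F = (\<lambda>y. real_of_ereal (fconj f y))"
  define Gs where "Gs = (\<lambda>z. real_of_ereal (fconj g z))"
  define \<alpha>1 where "\<alpha>1 = real_of_ereal (Psi A g h S xh zh uh \<delta> \<gamma>)"
  define \<alpha>2 where "\<alpha>2 = inner (K xh) yh - real_of_ereal (fconj f yh)"
  have fnm: "\<And>y. fconj f y \<noteq> -\<infinity>" using fconj_neq_minf[OF f(1)] .
  have gnm: "\<And>z. fconj g z \<noteq> -\<infinity>" using fconj_neq_minf[OF g(1)] .
  have ffin: "fconj f y = ereal (F y)" if "fconj f y \<noteq> \<infinity>" for y
    using that fnm[of y] unfolding F_def by (cases "fconj f y") auto
  have gfin: "fconj g z = ereal (Gs z)" if "fconj g z \<noteq> \<infinity>" for z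
    using that gnm[of z] unfolding Gs_def by (cases "fconj g z") auto
  obtain \<epsilon>0 \<kappa> where e0: "\<epsilon>0 > 0" and k0: "\<kappa> > 0" and cb: "\<forall>y. norm (y - yh) < \<epsilon>0 \<longrightarrow>
       \<bar>fconj f y - fconj f yh\<bar> \<le> ereal (\<kappa> * norm (y - yh))"
    using calm(2) unfolding calm_at_def by blast
  have fyh: "fconj f yh = ereal (F yh)" using calm(1) ffin unfolding edom_def by simp
  have Fe: "fconj f y = ereal (F y) \<and> \<bar>F y - F yh\<bar> \<le> \<kappa> * norm (y - yh)" if "norm (y - yh) < \<epsilon>0" for y
  proof -
    have c: "\<bar>fconj f y - ereal (F yh)\<bar> \<le> ereal (\<kappa> * norm (y - yh))" using cb that fyh by simp
    have "fconj f y \<noteq> \<infinity>"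
    proof
      assume "fconj f y = \<infinity>" then show False using c by simp
    qed
    then have "fconj f y = ereal (F y)" by (rule ffin)
    then show ?thesis using c by simp
  qed
  have a2F: "\<alpha>2 = inner (K xh) yh - F yh" unfolding \<alpha>2_def F_def ..
  have a2m: "\<alpha>2 > m / 2" using xh(2) fyh a2F by simp
  have a2pos: "\<alpha>2 > 0" using a2m par(1) by simp
  have contF: "isCont F yh"
    unfolding isCont_def LIM_eq
  proof (intro allI impI)
    fix r :: real assume r: "r > 0"
    show "\<exists>s>0. \<forall>y. y \<noteq> yh \<and> norm (y - yh) < s \<longrightarrow> norm (F y - F yh) < r"
    proof (intro exI[of _ "min \<epsilon>0 (r / \<kappa>)"] conjI allI impI)
      show "min \<epsilon>0 (r / \<kappa>) > 0" using e0 k0 r by simp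
      fix y assume y: "y \<noteq> yh \<and> norm (y - yh) < min \<epsilon>0 (r / \<kappa>)"
      then have "\<bar>F y - F yh\<bar> \<le> \<kappa> * norm (y - yh)" using Fe by simp
      also have "\<dots> < \<kappa> * (r / \<kappa>)" using y k0 by (intro mult_strict_left_mono) auto
      also have "\<dots> = r" using k0 by simp
      finally show "norm (F y - F yh) < r" by simp
    qed
  qed
  have bK: "bounded_linear K" and bA: "bounded_linear A" using lin linear_conv_bounded_linear by auto
  have t1: "((\<lambda>p::'a \<times> 'c. fst p) \<longlongrightarrow> xh) (at (xh, yh))" using tendsto_fst[OF tendsto_ident_at[of "(xh, yh)" UNIV]] by simp
  have t2: "((\<lambda>p::'a \<times> 'c. snd p) \<longlongrightarrow> yh) (at (xh, yh))" using tendsto_snd[OF tendsto_ident_at[of "(xh, yh)" UNIV]] by simp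
  have t3: "((\<lambda>p::'a \<times> 'c. K (fst p)) \<longlongrightarrow> K xh) (at (xh, yh))" using bounded_linear.tendsto[OF bK t1] .
  have t4: "((\<lambda>p::'a \<times> 'c. F (snd p)) \<longlongrightarrow> F yh) (at (xh, yh))" using isCont_tendsto_compose[OF contF t2] .
  have "((\<lambda>p::'a \<times> 'c. inner (K (fst p)) (snd p) - F (snd p)) \<longlongrightarrow> \<alpha>2) (at (xh, yh))"
    unfolding a2F by (intro tendsto_diff tendsto_inner t3 t2 t4)
  from order_tendstoD(1)[OF this a2m]
  obtain d where d0: "d > 0" and dd: "\<forall>p. p \<noteq> (xh, yh) \<and> dist p (xh, yh) < d \<longrightarrow>
      m / 2 < inner (K (fst p)) (snd p) - F (snd p)"
    unfolding eventually_at by auto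
  define r where "r = min (d / 2) \<epsilon>0"
  have r0: "r > 0" using d0 e0 unfolding r_def by simp
  have phi: "m / 2 < inner (K x) y - F y \<and> fconj f y = ereal (F y)"
    if "norm (x - xh) < r" "norm (y - yh) < r" for x y
  proof
    show "fconj f y = ereal (F y)" using Fe that unfolding r_def by simp
    show "m / 2 < inner (K x) y - F y"
    proof (cases "(x, y) = (xh, yh)")
      case True then show ?thesis using a2m a2F by simp
    next
      case False
      have "dist (x, y) (xh, yh) = norm (x - xh, y - yh)" by (simp add: dist_norm)
      also have "\<dots> \<le> norm (x - xh) + norm (y - yh)" by (rule norm_Pair_le)
      also have "\<dots> < d" using that unfolding r_def by simp
      finally show ?thesis using dd False by fastforce
    qed
  qed
  have ball_iff: "\<And>(c::'q::real_normed_vector) q e. q \<in> ball c e \<longleftrightarrow> norm (q - c) < e"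
    by (simp add: dist_norm norm_minus_commute)
  define O1 where "O1 = ball xh r"
  define O2 where "O2 = ball yh r"
  define O3 where "O3 = interior (edom (fconj g))"
  have O2sub: "O2 \<subseteq> edom (fconj f)"
  proof
    fix y assume "y \<in> O2"
    then have "fconj f y = ereal (F y)" using phi[of xh y] r0 unfolding O2_def ball_iff by simp
    then show "y \<in> edom (fconj f)" unfolding edom_def by simp
  qed
  have O3sub: "O3 \<subseteq> edom (fconj g)" unfolding O3_def by (rule interior_subset)
  have O12: "\<forall>x\<in>O1. \<forall>y\<in>O2. ereal (inner (K x) y) - fconj f y > ereal (m / 2)"
  proof (intro ballI)
    fix x y assume "x \<in> O1" "y \<in> O2"
    then have "m / 2 < inner (K x) y - F y \<and> fconj f y = ereal (F y)"
      using phi unfolding O1_def O2_def ball_iff by simp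
    then show "ereal (inner (K x) y) - fconj f y > ereal (m / 2)" by simp
  qed
  obtain r3 where r30: "r3 > 0" and r3b: "ball zh r3 \<subseteq> O3"
    using zh(1) open_contains_ball[of O3] unfolding O3_def by auto
  have gzf: "fconj g z = ereal (Gs z)" if "norm (z - zh) < r3" for z
  proof -
    have "z \<in> ball zh r3" using that by (simp add: dist_norm norm_minus_commute)
    then have "z \<in> edom (fconj g)" using r3b O3sub by auto
    then show ?thesis using gfin unfolding edom_def by simp
  qed
  define w0 where "w0 = (xh, yh, zh, uh)"
  define P where "P = (\<lambda>w::'a \<times> 'c \<times> 'b \<times> 'a. inner (fst (snd (snd w))) (A (fst w)) - Gs (fst (snd (snd w))) + h (fst w)
        + \<delta> / 2 * inner (fst w - snd (snd (snd w))) (fst w - snd (snd (snd w)))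
        - \<gamma> / 2 * inner (fst (snd (snd w))) (fst (snd (snd w))))"
  define R where "R = (\<lambda>w::'a \<times> 'c \<times> 'b \<times> 'a. P w / (inner (K (fst w)) (fst (snd w)) - F (fst (snd w))))"
  define \<rho> where "\<rho> = min r r3"
  have rho0: "\<rho> > 0" using r0 r30 unfolding \<rho>_def by simp
  have comp_le: "norm (x - xh) \<le> norm (w - w0) \<and> norm (y - yh) \<le> norm (w - w0) \<and> norm (z - zh) \<le> norm (w - w0)"
    if "w = (x, y, z, u)" for w x y z u
  proof -
    have e: "w - w0 = (x - xh, y - yh, z - zh, u - uh)" using that unfolding w0_def by simp
    have "norm (y - yh) \<le> norm (y - yh, z - zh, u - uh)" by (rule norm_fst_le)
    also have "\<dots> \<le> norm (w - w0)" unfolding e by (rule norm_snd_le)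
    finally have 1: "norm (y - yh) \<le> norm (w - w0)" .
    have "norm (z - zh) \<le> norm (z - zh, u - uh)" by (rule norm_fst_le)
    also have "\<dots> \<le> norm (y - yh, z - zh, u - uh)" by (rule norm_snd_le)
    also have "\<dots> \<le> norm (w - w0)" unfolding e by (rule norm_snd_le)
    finally have 2: "norm (z - zh) \<le> norm (w - w0)" .
    have 3: "norm (x - xh) \<le> norm (w - w0)" unfolding e by (rule norm_fst_le)
    show ?thesis using 1 2 3 by simp
  qed
  have near: "(fst w \<in> S \<longrightarrow> Gam A K f g h S m \<delta> \<gamma> w = ereal (R w)) \<and>
              (fst w \<notin> S \<longrightarrow> Gam A K f g h S m \<delta> \<gamma> w = \<infinity>)" if "norm (w - w0) < \<rho>" for w
  proof -
    obtain x y z u where w: "w = (x, y, z, u)" by (cases w) auto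
    note cl = comp_le[OF w]
    have ph: "m / 2 < inner (K x) y - F y \<and> fconj f y = ereal (F y)"
      using phi[of x y] cl that unfolding \<rho>_def by simp
    have gz: "fconj g z = ereal (Gs z)" using gzf cl that unfolding \<rho>_def by simp
    show ?thesis using Gam_eq[where K=K and x=x and y=y and f=f and Fy="F y" and g=g and z=z and Gz="Gs z" and m=m
        and A=A and h=h and S=S and \<delta>=\<delta> and \<gamma>=\<gamma> and u=u, OF conjunct2[OF ph] gz conjunct1[OF ph] par(1)] w
      unfolding R_def P_def by simp
  qed
  have ev: "eventually (\<lambda>w. (fst w \<in> S \<longrightarrow> Gam A K f g h S m \<delta> \<gamma> w = ereal (R w)) \<and>
              (fst w \<notin> S \<longrightarrow> Gam A K f g h S m \<delta> \<gamma> w = \<infinity>)) (at w0)"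
    unfolding eventually_at using rho0 near by (auto simp: dist_norm intro!: exI[of _ \<rho>])
  have G0: "Gam A K f g h S m \<delta> \<gamma> w0 = ereal (R w0)" using near[of w0] rho0 xh(1) unfolding w0_def by simp
  note FS1 = frechet_char[OF ev G0]
  have a1P: "\<alpha>1 = P w0" using Psi_eq[OF gzf[of zh] xh(1), of A h uh \<delta> \<gamma>] r30
    unfolding \<alpha>1_def P_def w0_def by simp
  have Rw0: "R w0 = \<alpha>1 / \<alpha>2" unfolding R_def a1P a2F w0_def by simp
  have dG: "(Gs has_derivative (\<lambda>v. inner v Dg)) (at zh)" using zh(2) unfolding gderiv_def Gs_def .
  have dh: "(h has_derivative (\<lambda>v. inner v (gradh xh))) (at xh)" using h(3) h(2) xh(1) unfolding gderiv_def by blast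
  have den0: "inner (K xh) yh - F yh \<noteq> 0" using a2pos a2F by simp
  define lP where "lP = (adjoint A zh + gradh xh + \<delta> *\<^sub>R (xh - uh), 0::'c, A xh - Dg - \<gamma> *\<^sub>R zh, \<delta> *\<^sub>R (uh - xh))"
  define lB where "lB = (adjoint K yh, K xh, 0::'b, 0::'a)"
  have PD: "((\<lambda>p. P (fst p) / (inner (K (fst (fst p))) (fst (snd (fst p))) - snd p)) has_derivative
     (\<lambda>dp. - P w0 * (inverse \<alpha>2 * (inner lB (fst dp) - snd dp) * inverse \<alpha>2) + inner lP (fst dp) / \<alpha>2))
     (at (w0, F yh))"
    using Phi_deriv[where \<delta>=\<delta> and \<gamma>=\<gamma> and uh=uh, OF lin dG dh den0]
    unfolding P_def lP_def lB_def w0_def a2F by simp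
  have a1pos: "\<alpha>1 > 0" using alpha1 Psi_eq[OF gzf[of zh] xh(1), of A h uh \<delta> \<gamma>] r30
    unfolding \<alpha>1_def by simp
  define c where "c = \<alpha>1 / \<alpha>2\<^sup>2"
  have c0: "c > 0" unfolding c_def using a1pos a2pos by simp
  define lx where "lx = (1 / \<alpha>2) *\<^sub>R (adjoint A zh + gradh xh + \<delta> *\<^sub>R (xh - uh)) - c *\<^sub>R adjoint K yh"
  define ly where "ly = - (c *\<^sub>R K xh)"
  define lz where "lz = (1 / \<alpha>2) *\<^sub>R (A xh - Dg - \<gamma> *\<^sub>R zh)"
  define lu where "lu = (\<delta> / \<alpha>2) *\<^sub>R (uh - xh)"
  define lv where "lv = (lx, ly, lz, lu)"
  have phi'_eq: "- P w0 * (inverse \<alpha>2 * (inner lB dw - ds) * inverse \<alpha>2) + inner lP dw / \<alpha>2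
      = inner lv dw + c * ds" for dw :: "'a \<times> 'c \<times> 'b \<times> 'a" and ds
  proof -
    obtain dx dy dz du where dw: "dw = (dx, dy, dz, du)" by (cases dw) auto
    show ?thesis
      unfolding dw lv_def lx_def ly_def lz_def lu_def lP_def lB_def c_def a1P[symmetric]
      using a2pos
      by (simp add: inner_add_left inner_diff_left inner_add_right inner_diff_right
          field_simps power2_eq_square)
  qed
  have Lb: "eventually (\<lambda>w. norm ((\<lambda>w. (w, F (fst (snd w)))) w - (w0, F yh)) \<le> (1 + \<kappa>) * norm (w - w0)) (at w0)"
    unfolding eventually_at
  proof (intro exI[of _ \<epsilon>0] conjI ballI impI)
    show "\<epsilon>0 > 0" by (rule e0)
    fix w assume w1: "w \<noteq> w0 \<and> dist w w0 < \<epsilon>0"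
    obtain x y z u where w: "w = (x, y, z, u)" by (cases w) auto
    have ny: "norm (y - yh) \<le> norm (w - w0)" using comp_le[OF w] by simp
    have "\<bar>F y - F yh\<bar> \<le> \<kappa> * norm (y - yh)" using Fe[of y] ny w1 by (simp add: dist_norm)
    also have "\<dots> \<le> \<kappa> * norm (w - w0)" using ny k0 by (intro mult_left_mono) auto
    finally have fy: "\<bar>F y - F yh\<bar> \<le> \<kappa> * norm (w - w0)" .
    have "norm ((w, F y) - (w0, F yh)) = norm (w - w0, F y - F yh)" by simp
    also have "\<dots> \<le> norm (w - w0) + norm (F y - F yh)" by (rule norm_Pair_le)
    also have "\<dots> \<le> (1 + \<kappa>) * norm (w - w0)" using fy by (simp add: algebra_simps)
    finally show "norm ((\<lambda>w. (w, F (fst (snd w)))) w - (w0, F yh)) \<le> (1 + \<kappa>) * norm (w - w0)"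
      using w by simp
  qed
  have rem2: "\<forall>e>0. eventually (\<lambda>w. \<bar>(R w - R w0 - inner v (w - w0))
       - (c * (F (fst (snd w)) - F yh) - inner (v - lv) (w - w0))\<bar> \<le> e * norm (w - w0)) (at w0)" for v
  proof (intro allI impI)
    fix e :: real assume e: "e > 0"
    from calm_comp_deriv[OF PD Lb e]
    show "eventually (\<lambda>w. \<bar>(R w - R w0 - inner v (w - w0))
       - (c * (F (fst (snd w)) - F yh) - inner (v - lv) (w - w0))\<bar> \<le> e * norm (w - w0)) (at w0)"
    proof eventually_elim
      case (elim w)
      have e1: "P (fst (w, F (fst (snd w)))) / (inner (K (fst (fst (w, F (fst (snd w)))))) (fst (snd (fst (w, F (fst (snd w)))))) - snd (w, F (fst (snd w)))) = R w"
        unfolding R_def by simp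
      have e2: "P (fst (w0, F yh)) / (inner (K (fst (fst (w0, F yh)))) (fst (snd (fst (w0, F yh)))) - snd (w0, F yh)) = R w0"
        unfolding R_def w0_def by simp
      have e3: "(R w - R w0 - inner v (w - w0)) - (c * (F (fst (snd w)) - F yh) - inner (v - lv) (w - w0))
          = R w - R w0 - (inner lv (w - w0) + c * (F (fst (snd w)) - F yh))"
        by (simp add: inner_diff_left algebra_simps)
      show ?case using elim unfolding e3 phi'_eq[symmetric] by (simp add: e1 e2 R_def w0_def)
    qed
  qed
  have FS2: "v \<in> frechet_subdiff (Gam A K f g h S m \<delta> \<gamma>) w0 \<longleftrightarrow>
     (\<forall>e>0. eventually (\<lambda>w. fst w \<in> S \<longrightarrow> c * (F (fst (snd w)) - F yh) - inner (v - lv) (w - w0)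
        > - e * norm (w - w0)) (at w0))" for v
    using FS1[of v] transfer_ev[OF rem2[of v], where D="\<lambda>w. fst w \<in> S"] by simp
  have Fe': "\<forall>y. norm (y - yh) < \<epsilon>0 \<longrightarrow> fconj f y = ereal (F y)" using Fe by blast
  have FSeq: "frechet_subdiff (Gam A K f g h S m \<delta> \<gamma>) (xh, yh, zh, uh) =
                {(\<xi>x, \<xi>y, \<xi>z, \<xi>u).
                   (\<exists>w\<in>csubdiff (ind S) xh.
                      \<xi>x = (1 / \<alpha>2\<^sup>2) *\<^sub>R (\<alpha>2 *\<^sub>R (adjoint A zh + gradh xh + w + \<delta> *\<^sub>R (xh - uh))
                                          - \<alpha>1 *\<^sub>R adjoint K yh)) \<and>
                   (\<exists>v\<in>csubdiff (fconj f) yh. \<xi>y = (\<alpha>1 / \<alpha>2\<^sup>2) *\<^sub>R (v - K xh)) \<and>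
                   \<xi>z = (1 / \<alpha>2) *\<^sub>R (A xh - Dg - \<gamma> *\<^sub>R zh) \<and>
                   \<xi>u = (\<delta> / \<alpha>2) *\<^sub>R (uh - xh)}"
  proof (rule set_eqI)
    fix v :: "'a \<times> 'c \<times> 'b \<times> 'a"
    obtain vx vy vz vu where v: "v = (vx, vy, vz, vu)" by (cases v) auto
    have "v \<in> frechet_subdiff (Gam A K f g h S m \<delta> \<gamma>) (xh, yh, zh, uh) \<longleftrightarrow>
       (vx - lx \<in> csubdiff (ind S) xh \<and> (1/c) *\<^sub>R (vy - ly) \<in> csubdiff (fconj f) yh \<and> vz - lz = 0 \<and> vu - lu = 0)"
      using FS2[of v] char_iff[where S=S and xh=xh and c=c and \<epsilon>=\<epsilon>0 and f=f and F=F and yh=yh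
          and a="vx - lx" and b="vy - ly" and cz="vz - lz" and cu="vu - lu" and zh=zh and uh=uh,
          OF S(2) xh(1) c0 e0 Fe' f(1)]
      unfolding v w0_def lv_def by simp
    also have "\<dots> \<longleftrightarrow> v \<in> {(\<xi>x, \<xi>y, \<xi>z, \<xi>u).
                   (\<exists>w\<in>csubdiff (ind S) xh.
                      \<xi>x = (1 / \<alpha>2\<^sup>2) *\<^sub>R (\<alpha>2 *\<^sub>R (adjoint A zh + gradh xh + w + \<delta> *\<^sub>R (xh - uh))
                                          - \<alpha>1 *\<^sub>R adjoint K yh)) \<and>
                   (\<exists>v\<in>csubdiff (fconj f) yh. \<xi>y = (\<alpha>1 / \<alpha>2\<^sup>2) *\<^sub>R (v - K xh)) \<and>
                   \<xi>z = (1 / \<alpha>2) *\<^sub>R (A xh - Dg - \<gamma> *\<^sub>R zh) \<and>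
                   \<xi>u = (\<delta> / \<alpha>2) *\<^sub>R (uh - xh)}"
    proof -
      have fx: "(1 / \<alpha>2\<^sup>2) *\<^sub>R (\<alpha>2 *\<^sub>R (adjoint A zh + gradh xh + w + \<delta> *\<^sub>R (xh - uh))
                                          - \<alpha>1 *\<^sub>R adjoint K yh) = lx + (1 / \<alpha>2) *\<^sub>R w" for w
        unfolding lx_def c_def using a2pos
        by (simp add: algebra_simps power2_eq_square scaleR_add_right scaleR_diff_right)
      have xpart: "(\<exists>w\<in>csubdiff (ind S) xh. vx = lx + (1 / \<alpha>2) *\<^sub>R w) \<longleftrightarrow> vx - lx \<in> csubdiff (ind S) xh"
      proof
        assume "\<exists>w\<in>csubdiff (ind S) xh. vx = lx + (1 / \<alpha>2) *\<^sub>R w"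
        then obtain w where w: "w \<in> csubdiff (ind S) xh" "vx = lx + (1 / \<alpha>2) *\<^sub>R w" by blast
        have "\<forall>y\<in>S. inner w (y - xh) \<le> 0" using w(1) csubdiff_ind[OF xh(1)] by simp
        then have "\<forall>y\<in>S. inner ((1 / \<alpha>2) *\<^sub>R w) (y - xh) \<le> 0" using a2pos
          by (simp add: divide_nonpos_pos)
        then show "vx - lx \<in> csubdiff (ind S) xh" using w(2) csubdiff_ind[OF xh(1)] by simp
      next
        assume a: "vx - lx \<in> csubdiff (ind S) xh"
        have "\<forall>y\<in>S. inner (vx - lx) (y - xh) \<le> 0" using a csubdiff_ind[OF xh(1)] by simp
        then have "\<forall>y\<in>S. inner (\<alpha>2 *\<^sub>R (vx - lx)) (y - xh) \<le> 0" using a2pos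
          by (simp add: mult_nonneg_nonpos)
        then have "\<alpha>2 *\<^sub>R (vx - lx) \<in> csubdiff (ind S) xh" using csubdiff_ind[OF xh(1)] by simp
        moreover have "vx = lx + (1 / \<alpha>2) *\<^sub>R (\<alpha>2 *\<^sub>R (vx - lx))" using a2pos by simp
        ultimately show "\<exists>w\<in>csubdiff (ind S) xh. vx = lx + (1 / \<alpha>2) *\<^sub>R w" by blast
      qed
      have ypart: "(\<exists>v'\<in>csubdiff (fconj f) yh. vy = (\<alpha>1 / \<alpha>2\<^sup>2) *\<^sub>R (v' - K xh)) \<longleftrightarrow>
          (1/c) *\<^sub>R (vy - ly) \<in> csubdiff (fconj f) yh"
      proof -
        have "vy = c *\<^sub>R (v' - K xh) \<longleftrightarrow> v' = (1/c) *\<^sub>R (vy - ly)" for v'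
        proof
          assume "vy = c *\<^sub>R (v' - K xh)"
          then show "v' = (1/c) *\<^sub>R (vy - ly)" unfolding ly_def using c0 by (simp add: algebra_simps)
        next
          assume "v' = (1/c) *\<^sub>R (vy - ly)"
          then show "vy = c *\<^sub>R (v' - K xh)" unfolding ly_def using c0 by (simp add: algebra_simps)
        qed
        then show ?thesis unfolding c_def[symmetric] by auto
      qed
      have zpart: "vz - lz = 0 \<longleftrightarrow> vz = (1 / \<alpha>2) *\<^sub>R (A xh - Dg - \<gamma> *\<^sub>R zh)" unfolding lz_def by simp
      have upart: "vu - lu = 0 \<longleftrightarrow> vu = (\<delta> / \<alpha>2) *\<^sub>R (uh - xh)" unfolding lu_def by simp
      show ?thesis unfolding v using xpart ypart zpart upart fx by simp
    qed
    finally show "v \<in> frechet_subdiff (Gam A K f g h S m \<delta> \<gamma>) (xh, yh, zh, uh) \<longleftrightarrow> v \<in> {(\<xi>x, \<xi>y, \<xi>z, \<xi>u).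
                   (\<exists>w\<in>csubdiff (ind S) xh.
                      \<xi>x = (1 / \<alpha>2\<^sup>2) *\<^sub>R (\<alpha>2 *\<^sub>R (adjoint A zh + gradh xh + w + \<delta> *\<^sub>R (xh - uh))
                                          - \<alpha>1 *\<^sub>R adjoint K yh)) \<and>
                   (\<exists>v\<in>csubdiff (fconj f) yh. \<xi>y = (\<alpha>1 / \<alpha>2\<^sup>2) *\<^sub>R (v - K xh)) \<and>
                   \<xi>z = (1 / \<alpha>2) *\<^sub>R (A xh - Dg - \<gamma> *\<^sub>R zh) \<and>
                   \<xi>u = (\<delta> / \<alpha>2) *\<^sub>R (uh - xh)}" .
  qed
  have mem: "xh \<in> O1" "yh \<in> O2" "zh \<in> O3" unfolding O1_def O2_def O3_def using r0 zh(1) by auto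
  have opn: "open O1" "open O2" "open O3" unfolding O1_def O2_def O3_def by auto
  show ?thesis
    unfolding Let_def \<alpha>1_def[symmetric] \<alpha>2_def[symmetric]
    using opn O2sub O3sub mem O12 FSeq by blast
qed

end
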